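(* Let $x>1$ be an irrational real number with continued fraction expansion $x=[a_1,a_2,\ldots]$ (all $a_i\in\mathbb{Z}_{\geq1}$) and convergents $x_n=[a_1,\ldots,a_n]$. Let $m\geq2$ be even, so that $x_{m-1}<x_m$, and put $a=a_1+\cdots+a_m-1$. Then for every rational number $r/s$ with $x_{m-1}<r/s<x_m$, the coefficients of $q^j$ for $0\leq j\leq a-1$ in the Taylor series at $q=0$ of $[r/s]_q$ coincide with the corresponding coefficients of $[x_{m-1}]_q$ and of $[x_m]_q$.
   Context: For an integer $a\geq1$ put $[a]_q=1+q+\cdots+q^{a-1}$ and $[a]_{q^{-1}}=1+q^{-1}+\cdots+q^{-(a-1)}$. Every rational number $r/s>1$ has a unique expansion as a regular continued fraction of even length, $$r/s=[a_1,\ldots,a_{2m}]=a_1+\cfrac{1}{a_2+\cfrac{1}{\ddots+\cfrac{1}{a_{2m}}}},$$ with all $a_i\in\mathbb{Z}_{\geq1}$. Its $q$-deformation is the rational function $$\left[\tfrac{r}{s}\right]_q=[a_1]_q+\cfrac{q^{a_1}}{[a_2]_{q^{-1}}+\cfrac{q^{-a_2}}{[a_3]_q+\cfrac{q^{a_3}}{[a_4]_{q^{-1}}+\cfrac{q^{-a_4}}{\ddots+\cfrac{q^{a_{2m-1}}}{[a_{2m}]_{q^{-1}}}}}}}.$$ One also sets $[1]_q=1$. Each $[r/s]_q$ is a quotient of polynomials with nonnegative integer coefficients, each having constant term $1$, and is identified with its Taylor expansion at $q=0$. Convergents are deformed using their own even-length expansions. *)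

theory Defs
  imports Complex_Main "HOL-Computational_Algebra.Formal_Laurent_Series"
begin

fun cf_val :: "nat list \<Rightarrow> rat" where
  "cf_val [] = 0"
| "cf_val [a] = of_nat a"
| "cf_val (a # b # as) = of_nat a + 1 / cf_val (b # as)"

text \<open>q-integers [a]_q (flag True) and [a]_{q^{-1}} (flag False), as Laurent series in q.\<close>
definition qint :: "bool \<Rightarrow> nat \<Rightarrow> rat fls" where
  "qint b a = (\<Sum>i<a. (if b then fls_X else fls_X_inv) ^ i)"

definition qpow :: "bool \<Rightarrow> nat \<Rightarrow> rat fls" where
  "qpow b a = (if b then fls_X else fls_X_inv) ^ a"

text \<open>The q-deformed continued fraction; the flag records whether the current
level uses q (True) or q^{-1} (False).\<close>
fun qcf :: "bool \<Rightarrow> nat list \<Rightarrow> rat fls" where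
  "qcf b [] = 0"
| "qcf b [a] = qint b a"
| "qcf b (a # c # as) = qint b a + qpow b a / qcf (\<not> b) (c # as)"

text \<open>[x]_q for a rational x: [1]_q = 1; for x > 1 use the unique even-length expansion.\<close>
definition qrat :: "rat \<Rightarrow> rat fls" where
  "qrat x = (if x = 1 then 1 else
     qcf True (THE as. as \<noteq> [] \<and> even (length as) \<and> (\<forall>c\<in>set as. c \<ge> 1) \<and> cf_val as = x))"

text \<open>n-th convergent [a_1,...,a_n] of a sequence indexed from 1.\<close>
definition conv :: "(nat \<Rightarrow> nat) \<Rightarrow> nat \<Rightarrow> rat" where
  "conv a n = cf_val (map a [1..<n+1])"

end

theory Submission
  imports Defs
begin


lemma qint_T_nz: "c \<ge> 1 \<Longrightarrow> qint True c \<noteq> 0 \<and> fls_subdegree (qint True c) = 0"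
proof -
  assume c: "c \<ge> 1"
  have n0: "fls_nth (qint True c) 0 = 1"
    unfolding qint_def fls_nth_sum fls_X_power_nth using c
    by (simp add: sum.delta)
  have "\<And>k. k < 0 \<Longrightarrow> fls_nth (qint True c) k = 0"
    unfolding qint_def fls_nth_sum by auto
  then show ?thesis using n0 by (metis fls_nonzeroI fls_subdegree_eqI zero_neq_one)
qed

lemma qint_F_nz: "d \<ge> 1 \<Longrightarrow> qint False d \<noteq> 0 \<and> fls_subdegree (qint False d) = 1 - int d"
proof -
  assume c: "d \<ge> 1"
  have n0: "fls_nth (qint False d) (1 - int d) = 1"
  proof -
    have "fls_nth (qint False d) (1 - int d) = (\<Sum>i<d. if i = d - 1 then 1 else 0)"
      unfolding qint_def fls_nth_sum fls_X_inv_power_nth using c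
      by (intro sum.cong) auto
    also have "\<dots> = 1" using c by simp
    finally show ?thesis .
  qed
  have "\<And>k. k < 1 - int d \<Longrightarrow> fls_nth (qint False d) k = 0"
    unfolding qint_def fls_nth_sum by auto
  then show ?thesis using n0 by (metis fls_nonzeroI fls_subdegree_eqI zero_neq_one)
qed

lemma qpow_T: "qpow True c \<noteq> 0 \<and> fls_subdegree (qpow True c) = int c"
  by (simp add: qpow_def)
lemma qpow_F: "qpow False c \<noteq> 0 \<and> fls_subdegree (qpow False c) = - int c"
  by (simp add: qpow_def)

definition lb :: "rat fls \<Rightarrow> int \<Rightarrow> bool" where
  "lb f k \<longleftrightarrow> f = 0 \<or> k \<le> fls_subdegree f"

lemma lb_mono: "lb f k \<Longrightarrow> k' \<le> k \<Longrightarrow> lb f k'"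
  unfolding lb_def by auto

lemma lb_nth: "lb f k \<Longrightarrow> j < k \<Longrightarrow> fls_nth f j = 0"
  unfolding lb_def by auto

lemma add_dom: "(f::rat fls) \<noteq> 0 \<Longrightarrow> g \<noteq> 0 \<Longrightarrow> fls_subdegree f < fls_subdegree g
   \<Longrightarrow> f + g \<noteq> 0 \<and> fls_subdegree (f + g) = fls_subdegree f"
proof -
  assume a: "f \<noteq> 0" "g \<noteq> 0" "fls_subdegree f < fls_subdegree g"
  have "fls_nth (f + g) (fls_subdegree f) \<noteq> 0" using a by simp
  then have "f + g \<noteq> 0" by (metis fls_nonzeroI)
  with fls_subdegree_add_eq1[OF a(1,3)] show ?thesis by simp
qed

lemma div_sd: "(f::rat fls) \<noteq> 0 \<Longrightarrow> g \<noteq> 0 \<Longrightarrow> f / g \<noteq> 0 \<and> fls_subdegree (f / g) = fls_subdegree f - fls_subdegree g"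
  by (simp add: fls_divide_subdegree)


lemma lb_step: 
  fixes P Z Z' :: "rat fls"
  assumes "P \<noteq> 0" "Z \<noteq> 0" "Z' \<noteq> 0" "lb (Z - Z') k"
  shows "lb (P / Z - P / Z') (k + fls_subdegree P - fls_subdegree Z - fls_subdegree Z')"
proof -
  have e: "P / Z - P / Z' = P * (Z' - Z) / (Z * Z')" using assms by (simp add: field_simps)
  show ?thesis
  proof (cases "Z - Z' = 0")
    case True then show ?thesis unfolding lb_def by simp
  next
    case False
    then have "Z' - Z \<noteq> 0" by simp
    moreover have "fls_subdegree (Z' - Z) \<ge> k" using assms(4) False unfolding lb_def
      by (metis fls_subdegree_minus_sym)
    ultimately show ?thesis unfolding lb_def e using assms
      by (simp add: fls_divide_subdegree)
  qed
qed

lemma add_dom2: "(f::rat fls) \<noteq> 0 \<Longrightarrow> g \<noteq> 0 \<Longrightarrow> fls_subdegree g < fls_subdegree f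
   \<Longrightarrow> f + g \<noteq> 0 \<and> fls_subdegree (f + g) = fls_subdegree g"
  using add_dom[of g f] by (simp add: add.commute)

lemma qcf_sd: "l \<noteq> [] \<Longrightarrow> \<forall>c\<in>set l. c \<ge> 1 \<Longrightarrow>
   qcf b l \<noteq> 0 \<and> (b \<longrightarrow> fls_subdegree (qcf b l) = 0) \<and> (\<not> b \<longrightarrow> fls_subdegree (qcf b l) \<le> 1 - int (hd l))"
proof (induction b l rule: qcf.induct)
  case (1 b) then show ?case by simp
next
  case (2 b a) then show ?case using qint_T_nz[of a] qint_F_nz[of a] by (cases b) auto
next
  case (3 b a c as)
  then have IH: "qcf (\<not> b) (c # as) \<noteq> 0 \<and> (\<not> b \<longrightarrow> fls_subdegree (qcf (\<not> b) (c # as)) = 0) \<and>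
      (b \<longrightarrow> fls_subdegree (qcf (\<not> b) (c # as)) \<le> 1 - int c)" by simp
  have a1: "a \<ge> 1" "c \<ge> 1" using 3 by auto
  show ?case
  proof (cases b)
    case True
    let ?Q = "qcf False (c # as)"
    have Q: "?Q \<noteq> 0" "fls_subdegree ?Q \<le> 1 - int c" using IH True by auto
    have D: "qpow True a / ?Q \<noteq> 0" "fls_subdegree (qpow True a / ?Q) = int a - fls_subdegree ?Q"
      using div_sd[of "qpow True a" ?Q] Q qpow_T[of a] by auto
    have "qint True a + qpow True a / ?Q \<noteq> 0 \<and> fls_subdegree (qint True a + qpow True a / ?Q) = 0"
      using add_dom[of "qint True a" "qpow True a / ?Q"] D Q qint_T_nz[of a] a1 by auto
    then show ?thesis using True by simp
  next
    case False
    let ?Q = "qcf True (c # as)"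
    have Q: "?Q \<noteq> 0" "fls_subdegree ?Q = 0" using IH False by auto
    have D: "qpow False a / ?Q \<noteq> 0" "fls_subdegree (qpow False a / ?Q) = - int a"
      using div_sd[of "qpow False a" ?Q] Q qpow_F[of a] by auto
    have "qint False a + qpow False a / ?Q \<noteq> 0 \<and> fls_subdegree (qint False a + qpow False a / ?Q) = - int a"
      using add_dom2[of "qint False a" "qpow False a / ?Q"] D Q qint_F_nz[of a] a1 by auto
    then show ?thesis using False by simp
  qed
qed

fun qcfr :: "bool \<Rightarrow> nat list \<Rightarrow> rat fls \<Rightarrow> rat fls" where
  "qcfr b [] U = U"
| "qcfr b (c # pre) U = qint b c + qpow b c / qcfr (\<not> b) pre U"

lemma qcf_append: "l \<noteq> [] \<Longrightarrow> qcf b (pre @ l) = qcfr b pre (qcf (if even (length pre) then b else \<not> b) l)"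
proof (induction pre arbitrary: b)
  case Nil then show ?case by simp
next
  case (Cons c pre)
  obtain x xs where "pre @ l = x # xs" using Cons.prems by (cases "pre @ l") auto
  then have "qcf b ((c # pre) @ l) = qint b c + qpow b c / qcf (\<not> b) (pre @ l)" by simp
  then show ?case using Cons by simp
qed

lemma L1: "even (length pre) \<Longrightarrow> \<forall>c\<in>set pre. c \<ge> 1 \<Longrightarrow> U \<noteq> 0 \<Longrightarrow> fls_subdegree U = 0 \<Longrightarrow>
  qcfr True pre U \<noteq> 0 \<and> fls_subdegree (qcfr True pre U) = 0"
proof (induction pre rule: induct_list012)
  case 1 then show ?case by simp
next
  case (2 x) then show ?case by simp
next
  case (3 c d rest)
  let ?W = "qcfr True rest U"
  have W: "?W \<noteq> 0" "fls_subdegree ?W = 0" using 3 by auto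
  have a1: "c \<ge> 1" "d \<ge> 1" using 3 by auto
  let ?Z = "qint False d + qpow False d / ?W"
  have D: "qpow False d / ?W \<noteq> 0" "fls_subdegree (qpow False d / ?W) = - int d"
    using div_sd[of "qpow False d" ?W] W qpow_F[of d] by auto
  have Z: "?Z \<noteq> 0 \<and> fls_subdegree ?Z = - int d"
    using add_dom2[of "qint False d" "qpow False d / ?W"] D qint_F_nz[of d] a1 by auto
  have D2: "qpow True c / ?Z \<noteq> 0" "fls_subdegree (qpow True c / ?Z) = int c + int d"
    using div_sd[of "qpow True c" ?Z] Z qpow_T[of c] by auto
  have "qint True c + qpow True c / ?Z \<noteq> 0 \<and> fls_subdegree (qint True c + qpow True c / ?Z) = 0"
    using add_dom[of "qint True c" "qpow True c / ?Z"] D2 qint_T_nz[of c] a1 by auto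
  then show ?case by simp
qed

lemma L2: "even (length pre) \<Longrightarrow> \<forall>c\<in>set pre. c \<ge> 1 \<Longrightarrow> U \<noteq> 0 \<Longrightarrow> fls_subdegree U = 0 \<Longrightarrow>
  U' \<noteq> 0 \<Longrightarrow> fls_subdegree U' = 0 \<Longrightarrow> lb (U - U') k \<Longrightarrow>
  lb (qcfr True pre U - qcfr True pre U') (k + int (sum_list pre))"
proof (induction pre arbitrary: k rule: induct_list012)
  case 1 then show ?case by simp
next
  case (2 x) then show ?case by simp
next
  case (3 c d rest)
  let ?W = "qcfr True rest U"
  let ?W' = "qcfr True rest U'"
  have W: "?W \<noteq> 0" "fls_subdegree ?W = 0" using 3 L1[of rest U] by auto
  have W': "?W' \<noteq> 0" "fls_subdegree ?W' = 0" using 3 L1[of rest U'] by auto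
  have lW: "lb (?W - ?W') (k + int (sum_list rest))" using 3 by auto
  have a1: "c \<ge> 1" "d \<ge> 1" using 3 by auto
  let ?Z = "qint False d + qpow False d / ?W"
  let ?Z' = "qint False d + qpow False d / ?W'"
  have D: "qpow False d / ?W \<noteq> 0" "fls_subdegree (qpow False d / ?W) = - int d"
    using div_sd[of "qpow False d" ?W] W qpow_F[of d] by auto
  have Z: "?Z \<noteq> 0 \<and> fls_subdegree ?Z = - int d"
    using add_dom2[of "qint False d" "qpow False d / ?W"] D qint_F_nz[of d] a1 by auto
  have D': "qpow False d / ?W' \<noteq> 0" "fls_subdegree (qpow False d / ?W') = - int d"
    using div_sd[of "qpow False d" ?W'] W' qpow_F[of d] by auto
  have Z': "?Z' \<noteq> 0 \<and> fls_subdegree ?Z' = - int d"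
    using add_dom2[of "qint False d" "qpow False d / ?W'"] D' qint_F_nz[of d] a1 by auto
  have "?Z - ?Z' = qpow False d / ?W - qpow False d / ?W'" by simp
  then have lZ: "lb (?Z - ?Z') (k + int (sum_list rest) - int d)"
    using lb_step[OF _ W(1) W'(1) lW, of "qpow False d"] qpow_F[of d] W W' by simp
  have "qcfr True (c # d # rest) U - qcfr True (c # d # rest) U' = qpow True c / ?Z - qpow True c / ?Z'"
    by simp
  moreover have "lb (qpow True c / ?Z - qpow True c / ?Z') (k + int (sum_list rest) - int d + int c + int d + int d)"
    using lb_step[of "qpow True c" ?Z ?Z', OF _ _ _ lZ] qpow_T[of c] Z Z' by simp
  ultimately show ?case by (simp add: algebra_simps)
qed

lemma M: assumes "even (length pre)" "\<forall>x\<in>set pre. x \<ge> 1" "c \<ge> 1" "cs \<noteq> []" "\<forall>x\<in>set cs. x \<ge> 1"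
  shows "lb (qcf True (pre @ c # cs) - qcf True (pre @ [c])) (int (sum_list pre) + int c + int (hd cs) - 1)"
proof -
  let ?Q = "qcf False cs"
  have Q: "?Q \<noteq> 0" "fls_subdegree ?Q \<le> 1 - int (hd cs)" using qcf_sd[of cs False] assms by auto
  obtain x xs where cs: "cs = x # xs" using assms(4) by (cases cs) auto
  let ?U = "qcf True (c # cs)"
  let ?U' = "qcf True [c]"
  have U: "?U \<noteq> 0" "fls_subdegree ?U = 0" using qcf_sd[of "c # cs" True] assms by auto
  have U': "?U' \<noteq> 0" "fls_subdegree ?U' = 0" using qcf_sd[of "[c]" True] assms by auto
  have "?U - ?U' = qpow True c / ?Q" using cs by simp
  moreover have "qpow True c / ?Q \<noteq> 0 \<and> fls_subdegree (qpow True c / ?Q) = int c - fls_subdegree ?Q"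
    using div_sd[of "qpow True c" ?Q] Q qpow_T[of c] by auto
  ultimately have "lb (?U - ?U') (int c + int (hd cs) - 1)" unfolding lb_def using Q by auto
  from L2[OF assms(1,2) U U' this]
  have "lb (qcfr True pre ?U - qcfr True pre ?U') (int c + int (hd cs) - 1 + int (sum_list pre))" .
  moreover have "qcf True (pre @ c # cs) = qcfr True pre ?U" using qcf_append[of "c # cs" True pre] assms by simp
  moreover have "qcf True (pre @ [c]) = qcfr True pre ?U'" using qcf_append[of "[c]" True pre] assms by simp
  ultimately show ?thesis by (simp add: algebra_simps)
qed




lemma cf_cons: "ys \<noteq> [] \<Longrightarrow> cf_val (x # ys) = of_nat x + 1 / cf_val ys"
  by (cases ys) auto

lemma cf_ge1: "l \<noteq> [] \<Longrightarrow> \<forall>c\<in>set l. c \<ge> 1 \<Longrightarrow> cf_val l \<ge> 1"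
proof (induction l)
  case Nil then show ?case by simp
next
  case (Cons x xs)
  show ?case
  proof (cases "xs = []")
    case True then show ?thesis using Cons by simp
  next
    case False
    then have "cf_val xs \<ge> 1" using Cons by auto
    then have "1 / cf_val xs > 0" by simp
    moreover have "of_nat x \<ge> (1::rat)" using Cons by simp
    ultimately show ?thesis using cf_cons[OF False, of x] by linarith
  qed
qed

lemma cf_eq1: assumes h: "l \<noteq> []" "\<forall>c\<in>set l. c \<ge> 1" "cf_val l = 1" shows "l = [1]"
proof (cases l)
  case Nil then show ?thesis using h by simp
next
  case (Cons x xs)
  show ?thesis
  proof (cases "xs = []")
    case True then show ?thesis using h Cons by simp
  next
    case False
    then have "cf_val xs \<ge> 1" using h Cons cf_ge1 by auto
    then have "1 / cf_val xs > 0" by simp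
    moreover have "of_nat x \<ge> (1::rat)" using h Cons by auto
    ultimately have "cf_val (x # xs) > 1" using cf_cons[OF False, of x] by linarith
    then show ?thesis using h Cons by simp
  qed
qed

lemma aux: fixes u v :: rat
  assumes "u \<ge> 1" "v \<ge> 1" "of_nat a + 1 / u = of_nat b + 1 / v"
  shows "a = b \<and> u = v"
proof -
  have u: "0 < 1/u" "1/u \<le> 1" using assms by auto
  have v: "0 < 1/v" "1/v \<le> 1" using assms by auto
  have "\<not> a < b"
  proof
    assume "a < b" then have "of_nat a + 1 \<le> (of_nat b :: rat)" by (metis Suc_leI of_nat_Suc of_nat_le_iff add.commute)
    then show False using u v assms(3) by linarith
  qed
  moreover have "\<not> b < a"
  proof
    assume "b < a" then have "of_nat b + 1 \<le> (of_nat a :: rat)" by (metis Suc_leI of_nat_Suc of_nat_le_iff add.commute)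
    then show False using u v assms(3) by linarith
  qed
  ultimately have "a = b" by simp
  then show ?thesis using assms by simp
qed

lemma cf_uniq: "l1 \<noteq> [] \<Longrightarrow> l2 \<noteq> [] \<Longrightarrow> \<forall>c\<in>set l1. c \<ge> 1 \<Longrightarrow> \<forall>c\<in>set l2. c \<ge> 1 \<Longrightarrow>
  even (length l1) = even (length l2) \<Longrightarrow> cf_val l1 = cf_val l2 \<Longrightarrow> l1 = l2"
proof (induction l1 arbitrary: l2)
  case Nil then show ?case by simp
next
  case (Cons x xs)
  obtain y ys where l2: "l2 = y # ys" using Cons.prems by (cases l2) auto
  show ?case
  proof (cases "xs = []"; cases "ys = []")
    assume "xs = []" "ys = []" then show ?thesis using Cons.prems l2 by simp
  next
    assume a: "xs = []" "ys \<noteq> []"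
    have v: "cf_val ys \<ge> 1" using cf_ge1[of ys] a Cons.prems l2 by auto
    have x1: "x \<ge> 1" using Cons.prems by auto
    have "of_nat (x - 1) + 1 / (1::rat) = of_nat y + 1 / cf_val ys"
      using Cons.prems(6) a l2 cf_cons[OF a(2), of y] x1 by (simp add: of_nat_diff)
    then have "cf_val ys = 1" using aux[of 1 "cf_val ys"] v by auto
    then have "ys = [1]" using cf_eq1[of ys] a Cons.prems l2 by auto
    then show ?thesis using Cons.prems(5) a l2 by simp
  next
    assume a: "xs \<noteq> []" "ys = []"
    have v: "cf_val xs \<ge> 1" using cf_ge1[of xs] a Cons.prems l2 by auto
    have x1: "y \<ge> 1" using Cons.prems l2 by auto
    have "of_nat (y - 1) + 1 / (1::rat) = of_nat x + 1 / cf_val xs"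
      using Cons.prems(6) a l2 cf_cons[OF a(1), of x] x1 by (simp add: of_nat_diff)
    then have "cf_val xs = 1" using aux[of 1 "cf_val xs"] v by auto
    then have "xs = [1]" using cf_eq1[of xs] a Cons.prems l2 by auto
    then show ?thesis using Cons.prems(5) a l2 by simp
  next
    assume a: "xs \<noteq> []" "ys \<noteq> []"
    have u: "cf_val xs \<ge> 1" using cf_ge1[of xs] a Cons.prems l2 by auto
    have v: "cf_val ys \<ge> 1" using cf_ge1[of ys] a Cons.prems l2 by auto
    have "of_nat x + 1 / cf_val xs = of_nat y + 1 / cf_val ys"
      using Cons.prems(6) l2 cf_cons[OF a(1), of x] cf_cons[OF a(2), of y] by simp
    then have "x = y" "cf_val xs = cf_val ys" using aux u v by blast+
    moreover have "xs = ys" using Cons.IH[of ys] a Cons.prems l2 calculation by auto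
    ultimately show ?thesis using l2 by simp
  qed
qed

lemma cf_snoc1: "cf_val (l @ [c, 1]) = cf_val (l @ [c + 1])"
proof (induction l)
  case Nil then show ?case by simp
next
  case (Cons x l)
  then show ?case using cf_cons[of "l @ [c, 1]" x] cf_cons[of "l @ [c + 1]" x] by simp
qed

lemma qcf_snoc1: "qcf b (l @ [c, 1]) = qcf b (l @ [c + 1])"
proof (induction l arbitrary: b)
  case Nil then show ?case by (simp add: qint_def qpow_def)
next
  case (Cons x l)
  obtain y ys where e1: "l @ [c, 1] = y # ys" by (cases "l @ [c, 1]") auto
  obtain z zs where e2: "l @ [c + 1] = z # zs" by (cases "l @ [c + 1]") auto
  have "qcf b ((x # l) @ [c, 1]) = qint b x + qpow b x / qcf (\<not> b) (l @ [c, 1])" using e1 by simp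
  moreover have "qcf b ((x # l) @ [c + 1]) = qint b x + qpow b x / qcf (\<not> b) (l @ [c + 1])" using e2 by simp
  ultimately show ?case using Cons by simp
qed

lemma qrat_via: assumes "l' \<noteq> []" "even (length l')" "\<forall>c\<in>set l'. c \<ge> 1" "cf_val l' = x" "x \<noteq> 1"
  shows "qrat x = qcf True l'"
proof -
  have "(THE as. as \<noteq> [] \<and> even (length as) \<and> (\<forall>c\<in>set as. c \<ge> 1) \<and> cf_val as = x) = l'"
  proof (rule the_equality)
    show "l' \<noteq> [] \<and> even (length l') \<and> (\<forall>c\<in>set l'. c \<ge> 1) \<and> cf_val l' = x" using assms by simp
  next
    fix as assume h: "as \<noteq> [] \<and> even (length as) \<and> (\<forall>c\<in>set as. c \<ge> 1) \<and> cf_val as = x"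
    show "as = l'"
    proof (rule cf_uniq)
      show "as \<noteq> []" "\<forall>c\<in>set as. c \<ge> 1" "cf_val as = cf_val l'" using h assms by auto
      show "l' \<noteq> []" "\<forall>c\<in>set l'. c \<ge> 1" using assms by auto
      show "even (length as) = even (length l')" using h assms by simp
    qed
  qed
  then show ?thesis unfolding qrat_def using assms by simp
qed

lemma Qlem: assumes "l \<noteq> []" "\<forall>c\<in>set l. c \<ge> 1" shows "qrat (cf_val l) = qcf True l"
proof (cases "cf_val l = 1")
  case True
  then have "l = [1]" using cf_eq1 assms by auto
  then show ?thesis using True by (simp add: qrat_def qint_def)
next
  case ne: False
  show ?thesis
  proof (cases "even (length l)")
    case True show ?thesis using qrat_via[OF assms(1) True assms(2) refl ne] by simp
  next
    case odd: False
    obtain l0 c where l: "l = l0 @ [c]" using assms(1) by (cases l rule: rev_exhaust) auto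
    show ?thesis
    proof (cases "c \<ge> 2")
      case True
      have e: "l0 @ [c - 1 + 1] = l" using True l by simp
      have o2: "even (length (l0 @ [c - 1, 1]))" using odd l by simp
      have p2: "\<forall>x\<in>set (l0 @ [c - 1, 1]). x \<ge> 1" using assms(2) l True by auto
      have "qrat (cf_val l) = qcf True (l0 @ [c - 1, 1])"
        by (rule qrat_via[OF _ o2 p2]) (use cf_snoc1[of l0 "c - 1"] e ne in auto)
      then show ?thesis using qcf_snoc1[of True l0 "c - 1"] e by simp
    next
      case False
      then have c1: "c = 1" using assms l by auto
      have "l0 \<noteq> []" using c1 l ne by auto
      then obtain l1 d where l0: "l0 = l1 @ [d]" by (cases l0 rule: rev_exhaust) auto
      have e: "l = l1 @ [d, 1]" using l l0 c1 by simp
      have o2: "even (length (l1 @ [d + 1]))" using odd e by simp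
      have p2: "\<forall>x\<in>set (l1 @ [d + 1]). x \<ge> 1" using assms(2) e by auto
      have "qrat (cf_val l) = qcf True (l1 @ [d + 1])"
        by (rule qrat_via[OF _ o2 p2]) (use cf_snoc1[of l1 d] e ne in auto)
      then show ?thesis using qcf_snoc1[of True l1 d] e by simp
    qed
  qed
qed




fun cfr :: "nat list \<Rightarrow> rat \<Rightarrow> rat" where
  "cfr [] t = t"
| "cfr (c # pre) t = of_nat c + 1 / cfr pre t"

lemma cf_val_append: "cs \<noteq> [] \<Longrightarrow> cf_val (pre @ cs) = cfr pre (cf_val cs)"
proof (induction pre)
  case Nil then show ?case by simp
next
  case (Cons c pre)
  then show ?case using cf_cons[of "pre @ cs" c] by simp
qed

lemma cfr_pos: "t > 0 \<Longrightarrow> \<forall>c\<in>set pre. c \<ge> 1 \<Longrightarrow> cfr pre t > 0"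
proof (induction pre)
  case Nil then show ?case by simp
next
  case (Cons c pre)
  then have "1 / cfr pre t > 0" by simp
  then show ?case by (simp add: add_nonneg_pos)
qed

lemma inv_between: fixes u v w :: rat
  assumes "0 < u" "0 < v" "(1/u < w \<and> w < 1/v) \<or> (1/v < w \<and> w < 1/u)"
  shows "w > 0 \<and> ((u > 1/w \<and> 1/w > v) \<or> (v > 1/w \<and> 1/w > u))"
proof -
  have "1/u > 0" "1/v > 0" using assms by auto
  then have w: "w > 0" using assms by linarith
  have a: "1/u < w \<Longrightarrow> 1/w < u" using assms(1) w by (simp add: field_simps)
  have b: "1/v < w \<Longrightarrow> 1/w < v" using assms(2) w by (simp add: field_simps)
  have c: "w < 1/v \<Longrightarrow> v < 1/w" using assms(2) w by (simp add: field_simps)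
  have d: "w < 1/u \<Longrightarrow> u < 1/w" using assms(1) w by (simp add: field_simps)
  show ?thesis using a b c d w assms(3) by auto
qed

lemma INV: "pre \<noteq> [] \<Longrightarrow> \<forall>c\<in>set pre. c \<ge> 1 \<Longrightarrow> A > 0 \<Longrightarrow>
  (cf_val pre < y \<and> y < cfr pre A) \<or> (cfr pre A < y \<and> y < cf_val pre) \<Longrightarrow> \<exists>t>A. y = cfr pre t"
proof (induction pre arbitrary: y)
  case Nil then show ?case by simp
next
  case (Cons c pre)
  show ?case
  proof (cases "pre = []")
    case True
    have "1 / A > 0" using Cons.prems by simp
    moreover have "(of_nat c < y \<and> y < of_nat c + 1 / A) \<or> (of_nat c + 1 / A < y \<and> y < of_nat c)"
      using Cons.prems True by simp
    ultimately have h: "of_nat c < y" "y < of_nat c + 1 / A" by linarith+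
    define t where "t = 1 / (y - of_nat c)"
    have yc: "y - of_nat c > 0" using h by simp
    have "y - of_nat c < 1 / A" using h by simp
    then have "t > A" unfolding t_def using yc Cons.prems(3) by (simp add: field_simps)
    moreover have "y = cfr (c # pre) t" using True h unfolding t_def by simp
    ultimately show ?thesis by blast
  next
    case False
    let ?u = "cf_val pre" and ?v = "cfr pre A"
    have u: "?u > 0" using cf_ge1[OF False] Cons.prems by fastforce
    have v: "?v > 0" using cfr_pos[of A pre] Cons.prems by auto
    have "(1/?u < y - of_nat c \<and> y - of_nat c < 1/?v) \<or> (1/?v < y - of_nat c \<and> y - of_nat c < 1/?u)"
      using Cons.prems(4) cf_cons[OF False, of c] by auto
    from inv_between[OF u v this] have w: "y - of_nat c > 0"
      "(?u > 1/(y - of_nat c) \<and> 1/(y - of_nat c) > ?v) \<or> (?v > 1/(y - of_nat c) \<and> 1/(y - of_nat c) > ?u)"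
      by auto
    then obtain t where t: "t > A" "1/(y - of_nat c) = cfr pre t"
      using Cons.IH[OF False _ Cons.prems(3), of "1/(y - of_nat c)"] Cons.prems(2) by auto
    have "y = cfr (c # pre) t" using t(2) w(1) by (simp flip: t(2))
    then show ?thesis using t(1) by blast
  qed
qed

lemma exist_nat: "0 < q \<Longrightarrow> q \<le> p \<Longrightarrow> \<exists>cs. cs \<noteq> [] \<and> (\<forall>c\<in>set cs. c \<ge> 1) \<and>
   cf_val cs = of_nat p / of_nat q \<and> hd cs = p div q"
proof (induction q arbitrary: p rule: less_induct)
  case (less q)
  have "0 < p div q" using less.prems by (simp add: div_greater_zero_iff)
  then have d1: "p div q \<ge> 1" by simp
  have dm: "of_nat p = of_nat (p div q) * of_nat q + (of_nat (p mod q) :: rat)"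
    by (metis of_nat_add of_nat_mult div_mult_mod_eq)
  show ?case
  proof (cases "p mod q = 0")
    case True
    have "cf_val [p div q] = of_nat p / of_nat q" using dm True less.prems by simp
    then show ?thesis using d1 by (intro exI[of _ "[p div q]"]) auto
  next
    case False
    then have r: "p mod q < q" "0 < p mod q" "p mod q \<le> q" using less.prems by auto
    obtain cs where cs: "cs \<noteq> []" "\<forall>c\<in>set cs. c \<ge> 1" "cf_val cs = of_nat q / of_nat (p mod q)"
      using less.IH[OF r(1) r(2) r(3)] by blast
    have "cf_val ((p div q) # cs) = of_nat (p div q) + of_nat (p mod q) / of_nat q"
      using cf_cons[OF cs(1)] cs(3) by simp
    also have "\<dots> = of_nat p / of_nat q" using dm less.prems by (simp add: field_simps)
    finally show ?thesis using cs d1 by (intro exI[of _ "(p div q) # cs"]) auto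
  qed
qed

lemma exist_rat: fixes t :: rat assumes "t > of_nat A" "A \<ge> 1"
  shows "\<exists>cs. cs \<noteq> [] \<and> (\<forall>c\<in>set cs. c \<ge> 1) \<and> cf_val cs = t \<and> hd cs \<ge> A"
proof -
  obtain n d where nd: "quotient_of t = (n, d)" by (cases "quotient_of t") auto
  have td: "t = of_int n / of_int d" and d: "d > 0"
    using quotient_of_div[OF nd] quotient_of_denom_pos[OF nd] by auto
  have tpos: "t > 0" using assms by (smt (verit) of_nat_0_le_iff order_le_less_trans)
  then have n: "n > 0" using td d by (simp add: zero_less_divide_iff)
  define p where "p = nat n"
  define q where "q = nat d"
  have tpq: "t = of_nat p / of_nat q" unfolding p_def q_def using td n d by simp
  have q: "q > 0" unfolding q_def using d by simp
  have "of_nat A * of_nat q < (of_nat p :: rat)" using assms(1) tpq q by (simp add: field_simps)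
  then have Aq: "A * q < p" by (metis of_nat_less_iff of_nat_mult)
  then have "q \<le> p" using assms(2) q by (metis le_trans less_imp_le mult_le_mono1 mult_1)
  from exist_nat[OF q this] obtain cs where cs: "cs \<noteq> []" "\<forall>c\<in>set cs. c \<ge> 1"
    "cf_val cs = of_nat p / of_nat q" "hd cs = p div q" by blast
  have "A \<le> p div q" using Aq q by (simp add: less_eq_div_iff_mult_less_eq)
  then show ?thesis using cs tpq by auto
qed




theorem lemma3p1:
  fixes a :: "nat \<Rightarrow> nat" and x :: real and m :: nat and y :: rat
  assumes a_pos: "\<forall>i\<ge>1. a i \<ge> 1"
    and x_gt: "x > 1"
    and x_irr: "x \<notin> \<rat>"
    and x_cf: "(\<lambda>n. real_of_rat (conv a n)) \<longlonglongrightarrow> x"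
    and m_even: "even m" and m_ge: "m \<ge> 2"
    and y_lo: "conv a (m - 1) < y" and y_hi: "y < conv a m"
  shows "\<forall>j < (\<Sum>i=1..m. a i) - 1.
           fls_nth (qrat y) (int j) = fls_nth (qrat (conv a (m - 1))) (int j) \<and>
           fls_nth (qrat y) (int j) = fls_nth (qrat (conv a m)) (int j)"
proof -
  define pre0 where "pre0 = map a [1..<m-1]"
  define pre where "pre = map a [1..<m]"
  have pre: "pre = pre0 @ [a (m - 1)]" unfolding pre_def pre0_def using m_ge
    by (metis Suc_diff_1 Suc_le_lessD le_add_diff_inverse2 less_one not_less_eq numeral_2_eq_2
       upt_Suc_append  map_append list.simps(8,9) One_nat_def nat_le_linear le_trans less_imp_le_nat)
  have full: "map a [1..<m+1] = pre @ [a m]" unfolding pre_def using m_ge by simp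
  have pos0: "\<forall>c\<in>set pre0. c \<ge> 1" unfolding pre0_def using a_pos by auto
  have pos: "\<forall>c\<in>set pre. c \<ge> 1" unfolding pre_def using a_pos by auto
  have am: "a m \<ge> 1" "a (m - 1) \<ge> 1" using a_pos m_ge by auto
  have ev0: "even (length pre0)" unfolding pre0_def using m_even m_ge by simp
  have preNE: "pre \<noteq> []" using pre by simp
  have x1: "conv a (m - 1) = cf_val pre" unfolding conv_def pre_def using m_ge by simp
  have x2: "conv a m = cf_val (pre @ [a m])" unfolding conv_def using full by simp
  have sum: "(\<Sum>i=1..m. a i) = sum_list pre0 + a (m - 1) + a m"
  proof -
    have "(\<Sum>i=1..m. a i) = sum a (set [1..<m+1])"
    proof -
      have "set [1..<m+1] = {1..m}" by auto
      then show ?thesis by simp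
    qed
    also have "\<dots> = sum_list (map a [1..<m+1])" by (rule sum_set_upt_conv_sum_list_nat)
    also have "\<dots> = sum_list pre0 + a (m - 1) + a m" using full pre by simp
    finally show ?thesis .
  qed
  have q1: "qrat (conv a (m - 1)) = qcf True (pre0 @ [a (m - 1)])"
    using Qlem[OF preNE pos] x1 pre by simp
  have q2: "qrat (conv a m) = qcf True (pre0 @ a (m - 1) # [a m])"
    using Qlem[of "pre @ [a m]"] pos am x2 pre by simp
  have cfrA: "cfr pre (of_nat (a m)) = conv a m" using x2 cf_val_append[of "[a m]" pre] by simp
  obtain t where t: "t > of_nat (a m)" "y = cfr pre t"
    using INV[OF preNE pos, of "of_nat (a m)" y] am y_lo y_hi x1 cfrA by auto
  obtain cs where cs: "cs \<noteq> []" "\<forall>c\<in>set cs. c \<ge> 1" "cf_val cs = t" "hd cs \<ge> a m"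
    using exist_rat[OF t(1) am(1)] by blast
  have yv: "y = cf_val (pre @ cs)" using cf_val_append[OF cs(1)] cs t by simp
  have posc: "\<forall>c\<in>set (pre @ cs). c \<ge> 1" using pos cs by auto
  have qy: "qrat y = qcf True (pre0 @ a (m - 1) # cs)"
    using Qlem[OF _ posc] yv pre by simp
  have L1: "lb (qrat y - qrat (conv a (m - 1))) (int (sum_list pre0) + int (a (m - 1)) + int (hd cs) - 1)"
    using M[OF ev0 pos0 am(2) cs(1,2)] qy q1 by simp
  have L2: "lb (qrat (conv a m) - qrat (conv a (m - 1))) (int (sum_list pre0) + int (a (m - 1)) + int (a m) - 1)"
    using M[OF ev0 pos0 am(2), of "[a m]"] am q2 q1 by simp
  show ?thesis
  proof (intro allI impI)
    fix j assume j: "j < (\<Sum>i=1..m. a i) - 1"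
    then have j1: "int j < int (sum_list pre0) + int (a (m - 1)) + int (hd cs) - 1"
      using sum cs(4) by linarith
    have j2: "int j < int (sum_list pre0) + int (a (m - 1)) + int (a m) - 1"
      using sum j by linarith
    have e1: "fls_nth (qrat y) (int j) = fls_nth (qrat (conv a (m - 1))) (int j)"
      using lb_nth[OF L1 j1] by simp
    have e2: "fls_nth (qrat (conv a m)) (int j) = fls_nth (qrat (conv a (m - 1))) (int j)"
      using lb_nth[OF L2 j2] by simp
    show "fls_nth (qrat y) (int j) = fls_nth (qrat (conv a (m - 1))) (int j) \<and>
           fls_nth (qrat y) (int j) = fls_nth (qrat (conv a m)) (int j)" using e1 e2 by simp
  qed
qed


end
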